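(* Let $K,M,N_c,N_g$ be positive integers with $N_g\le N_c$, let $\rho_{tr}>0$, and for each $k\in\{0,\dots,K-1\}$ let $\boldsymbol{\Omega}_k\in\mathbb{R}^{M\times N_g}$ have non-negative entries, let $\phi_k\in\{0,\dots,N_c-1\}$, and let $\varrho_k(\cdot)$ be a real-valued function on the integers. Define $\bar{\boldsymbol{\Omega}}_{k}=[\boldsymbol{\Omega}_k\ \ \mathbf{0}_{M\times(N_c-N_g)}]$ and $\boldsymbol{\Omega}_{k'}^{\phi_{k'}-\phi_k}=\bar{\boldsymbol{\Omega}}_{k'}\boldsymbol{\Pi}_{N_c}^{\phi_{k'}-\phi_k}\mathbf{I}_{N_c\times N_g}$. For each integer $\Delta_\ell$ define the sum mean square error of channel prediction $$\epsilon^{CP}(\Delta_\ell)=\sum_{k=0}^{K-1}\sum_{i=0}^{M-1}\sum_{j=0}^{N_g-1}\left\{[\boldsymbol{\Omega}_k]_{i,j}-\varrho_k^2(\Delta_\ell)\frac{[\boldsymbol{\Omega}_k]_{i,j}^2}{\sum_{k'=0}^{K-1}[\boldsymbol{\Omega}_{k'}^{\phi_{k'}-\phi_k}]_{i,j}+\frac1{\rho_{tr}}}\right\}.$$ Then for every $\Delta_\ell$, $$\epsilon^{CP}(\Delta_\ell)\ge\varepsilon^{CP}(\Delta_\ell)=\sum_{k=0}^{K-1}\sum_{i=0}^{M-1}\sum_{j=0}^{N_g-1}\left\{[\boldsymbol{\Omega}_k]_{i,j}-\varrho_k^2(\Delta_\ell)\frac{[\boldsymbol{\Omega}_k]_{i,j}^2}{[\boldsymbol{\Omega}_k]_{i,j}+\frac1{\rho_{tr}}}\right\},$$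 and equality holds if, for all $k\neq k'$, $\left(\bar{\boldsymbol{\Omega}}_{k}\boldsymbol{\Pi}_{N_c}^{\phi_k}\right)\odot\left(\bar{\boldsymbol{\Omega}}_{k'}\boldsymbol{\Pi}_{N_c}^{\phi_{k'}}\right)=\mathbf{0}$.
   Context: Indices start at $0$. $\langle n\rangle_N$ denotes $n$ modulo $N$. $\boldsymbol{\Pi}_N^{n}=\begin{bmatrix}\mathbf{0}&\mathbf{I}_{N-\langle n\rangle_N}\\ \mathbf{I}_{\langle n\rangle_N}&\mathbf{0}\end{bmatrix}$; $\mathbf{I}_{N\times G}$ is the first $G$ columns of $\mathbf{I}_N$; $\odot$ is the Hadamard product. Interpretation: $\boldsymbol{\Omega}_k$ is the angle-delay channel power matrix of user $k$, $\phi_k$ its pilot phase shift, $\rho_{tr}$ the pilot SNR, $\varrho_k$ the channel temporal correlation function (in the paper $\varrho_k(\Delta)=J_0(2\pi\nu_kT_{sym}\Delta)$), and $\epsilon^{CP}(\Delta_\ell)$ the sum MSE of MMSE prediction of the channel $\Delta_\ell$ symbols after the pilot symbol. *)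

theory Defs
  imports Complex_Main
begin

text \<open>Matrices are represented as functions nat \<Rightarrow> nat \<Rightarrow> real (row, column),
  indices starting at 0, with dimensions carried explicitly.\<close>

definition modN :: "int \<Rightarrow> nat \<Rightarrow> nat" where
  "modN n N = nat (n mod int N)"

text \<open>Cyclic permutation matrix Pi_N^n = [[0, I_{N-<n>}], [I_{<n>}, 0]] (N x N).\<close>
definition perm_mat :: "nat \<Rightarrow> int \<Rightarrow> nat \<Rightarrow> nat \<Rightarrow> real" where
  "perm_mat N n r c =
     (let m = modN n N in
      if r < N - m then (if c = r + m then 1 else 0)
      else (if c = r - (N - m) then 1 else 0))"

text \<open>I_{N x G}: first G columns of I_N.\<close>
definition id_cols :: "nat \<Rightarrow> nat \<Rightarrow> real" where
  "id_cols r c = (if r = c then 1 else 0)"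

definition mat_mult :: "nat \<Rightarrow> (nat \<Rightarrow> nat \<Rightarrow> real) \<Rightarrow> (nat \<Rightarrow> nat \<Rightarrow> real) \<Rightarrow> nat \<Rightarrow> nat \<Rightarrow> real" where
  "mat_mult n A B i j = (\<Sum>r<n. A i r * B r j)"

definition hadamard :: "(nat \<Rightarrow> nat \<Rightarrow> real) \<Rightarrow> (nat \<Rightarrow> nat \<Rightarrow> real) \<Rightarrow> nat \<Rightarrow> nat \<Rightarrow> real" where
  "hadamard A B i j = A i j * B i j"

definition pad :: "nat \<Rightarrow> (nat \<Rightarrow> nat \<Rightarrow> real) \<Rightarrow> nat \<Rightarrow> nat \<Rightarrow> real" where
  "pad Ng \<Omega> i c = (if c < Ng then \<Omega> i c else 0)"

definition shifted :: "nat \<Rightarrow> nat \<Rightarrow> (nat \<Rightarrow> nat \<Rightarrow> real) \<Rightarrow> int \<Rightarrow> nat \<Rightarrow> nat \<Rightarrow> real" where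
  "shifted Nc Ng \<Omega> d = mat_mult Nc (mat_mult Nc (pad Ng \<Omega>) (perm_mat Nc d)) id_cols"

definition eps_CP ::
  "nat \<Rightarrow> nat \<Rightarrow> nat \<Rightarrow> nat \<Rightarrow> real \<Rightarrow> (nat \<Rightarrow> nat \<Rightarrow> nat \<Rightarrow> real) \<Rightarrow> (nat \<Rightarrow> nat)
    \<Rightarrow> (nat \<Rightarrow> int \<Rightarrow> real) \<Rightarrow> int \<Rightarrow> real" where
  "eps_CP K M Nc Ng \<rho> \<Omega> \<phi> corr \<Delta> =
     (\<Sum>k<K. \<Sum>i<M. \<Sum>j<Ng.
        \<Omega> k i j - (corr k \<Delta>)\<^sup>2 * ((\<Omega> k i j)\<^sup>2 /
          ((\<Sum>k'<K. shifted Nc Ng (\<Omega> k') (int (\<phi> k') - int (\<phi> k)) i j) + 1 / \<rho>)))"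

definition veps_CP ::
  "nat \<Rightarrow> nat \<Rightarrow> nat \<Rightarrow> real \<Rightarrow> (nat \<Rightarrow> nat \<Rightarrow> nat \<Rightarrow> real)
    \<Rightarrow> (nat \<Rightarrow> int \<Rightarrow> real) \<Rightarrow> int \<Rightarrow> real" where
  "veps_CP K M Ng \<rho> \<Omega> corr \<Delta> =
     (\<Sum>k<K. \<Sum>i<M. \<Sum>j<Ng.
        \<Omega> k i j - (corr k \<Delta>)\<^sup>2 * ((\<Omega> k i j)\<^sup>2 / (\<Omega> k i j + 1 / \<rho>)))"

end

theory Submission
  imports Defs
begin

lemma perm_eq:
  assumes "r < N" "c < N"
  shows "perm_mat N d r c = (if int r = (int c - d) mod int N then 1 else 0)"
proof -
  define m where "m = modN d N"
  have N: "0 < N" using assms by simp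
  have dm: "d mod int N = int m" using N by (simp add: m_def modN_def)
  have mN: "m < N" using N dm by (metis of_nat_less_iff pos_mod_bound of_nat_0_less_iff)
  have "(int c - d) mod int N = (int c - int m) mod int N"
    by (metis dm mod_diff_right_eq)
  also have "\<dots> = (if m \<le> c then int c - int m else int c - int m + int N)"
  proof (cases "m \<le> c")
    case True then show ?thesis using assms mN by (simp add: mod_pos_pos_trivial)
  next
    case False
    have "(int c - int m) mod int N = (int c - int m + int N) mod int N" by simp
    also have "\<dots> = int c - int m + int N" using False assms mN by (intro mod_pos_pos_trivial) auto
    finally show ?thesis using False by simp
  qed
  finally have X: "(int c - d) mod int N = (if m \<le> c then int c - int m else int c - int m + int N)" .
  show ?thesis unfolding perm_mat_def Let_def m_def[symmetric] X using assms mN by auto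
qed

lemma mm_perm:
  assumes "c < N"
  shows "mat_mult N A (perm_mat N d) i c = A i (nat ((int c - d) mod int N))"
proof -
  have N: "0 < N" using assms by simp
  define X where "X = (int c - d) mod int N"
  have X0: "0 \<le> X" "X < int N" using N by (auto simp: X_def)
  have "mat_mult N A (perm_mat N d) i c = (\<Sum>r<N. A i r * (if r = nat X then 1 else 0))"
    unfolding mat_mult_def
    by (rule sum.cong) (use X0 assms in \<open>auto simp: perm_eq X_def[symmetric]\<close>)
  also have "\<dots> = (\<Sum>r<N. if r = nat X then A i r else 0)" by (rule sum.cong) auto
  also have "\<dots> = A i (nat X)" using X0 by (simp add: sum.delta nat_less_iff)
  finally show ?thesis by (simp add: X_def)
qed

lemma mm_id:
  assumes "j < N"
  shows "mat_mult N B id_cols i j = B i j"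
proof -
  have "mat_mult N B id_cols i j = (\<Sum>r<N. if r = j then B i r else 0)"
    unfolding mat_mult_def id_cols_def by (rule sum.cong) auto
  then show ?thesis using assms by (simp add: sum.delta)
qed

lemma shifted_eq:
  assumes "j < Nc"
  shows "shifted Nc Ng W d i j = pad Ng W i (nat ((int j - d) mod int Nc))"
  unfolding shifted_def using assms by (simp add: mm_id mm_perm)



theorem proposition4:
  fixes K M Nc Ng :: nat and \<rho> :: real
    and \<Omega> :: "nat \<Rightarrow> nat \<Rightarrow> nat \<Rightarrow> real" and \<phi> :: "nat \<Rightarrow> nat"
    and corr :: "nat \<Rightarrow> int \<Rightarrow> real"
  assumes "0 < K" "0 < M" "0 < Nc" "0 < Ng" "Ng \<le> Nc" "0 < \<rho>"
    and "\<And>k i j. k < K \<Longrightarrow> i < M \<Longrightarrow> j < Ng \<Longrightarrow> 0 \<le> \<Omega> k i j"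
    and "\<And>k. k < K \<Longrightarrow> \<phi> k < Nc"
  shows "\<forall>\<Delta>::int.
           eps_CP K M Nc Ng \<rho> \<Omega> \<phi> corr \<Delta> \<ge> veps_CP K M Ng \<rho> \<Omega> corr \<Delta>
         \<and> ((\<forall>k<K. \<forall>k'<K. k \<noteq> k' \<longrightarrow> (\<forall>i<M. \<forall>c<Nc.
                hadamard (mat_mult Nc (pad Ng (\<Omega> k)) (perm_mat Nc (int (\<phi> k))))
                         (mat_mult Nc (pad Ng (\<Omega> k')) (perm_mat Nc (int (\<phi> k')))) i c = 0))
            \<longrightarrow> eps_CP K M Nc Ng \<rho> \<Omega> \<phi> corr \<Delta> = veps_CP K M Ng \<rho> \<Omega> corr \<Delta>)"
  proof (intro allI conjI impI)
  fix \<Delta> :: int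
  let ?s = "\<lambda>k i j k'. shifted Nc Ng (\<Omega> k') (int (\<phi> k') - int (\<phi> k)) i j"
  have nn: "0 \<le> ?s k i j k'" if "k' < K" "i < M" "j < Ng" for k i j k'
  proof -
    have "j < Nc" using that assms(5) by simp
    then show ?thesis using that assms(7) by (simp add: shifted_eq pad_def)
  qed
  have diag: "?s k i j k = \<Omega> k i j" if "j < Ng" for k i j
  proof -
    have "j < Nc" using that assms(5) by simp
    then show ?thesis using that by (simp add: shifted_eq pad_def)
  qed
  have Dge: "\<Omega> k i j \<le> (\<Sum>k'<K. ?s k i j k')" if "k < K" "i < M" "j < Ng" for k i j
  proof -
    have "?s k i j k \<le> (\<Sum>k'<K. ?s k i j k')"
      by (rule member_le_sum) (use that nn in auto)
    then show ?thesis using diag that by simp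
  qed
  have rho: "0 < 1 / \<rho>" using assms(6) by simp
  have tmle: "(corr k \<Delta>)\<^sup>2 * ((\<Omega> k i j)\<^sup>2 / ((\<Sum>k'<K. ?s k i j k') + 1 / \<rho>))
      \<le> (corr k \<Delta>)\<^sup>2 * ((\<Omega> k i j)\<^sup>2 / (\<Omega> k i j + 1 / \<rho>))"
    if "k < K" "i < M" "j < Ng" for k i j
  proof (rule mult_left_mono)
    have "0 \<le> \<Omega> k i j" using assms(7) that by simp
    then show "(\<Omega> k i j)\<^sup>2 / ((\<Sum>k'<K. ?s k i j k') + 1 / \<rho>) \<le> (\<Omega> k i j)\<^sup>2 / (\<Omega> k i j + 1 / \<rho>)"
      using Dge[OF that] rho by (intro divide_left_mono mult_pos_pos) (auto intro: add_nonneg_pos add_pos_pos order.strict_trans2[of _ "\<Omega> k i j + 1/\<rho>"])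
  qed simp
  show "veps_CP K M Ng \<rho> \<Omega> corr \<Delta> \<le> eps_CP K M Nc Ng \<rho> \<Omega> \<phi> corr \<Delta>"
    unfolding veps_CP_def eps_CP_def
    by (intro sum_mono) (use tmle in auto)
  assume H: "\<forall>k<K. \<forall>k'<K. k \<noteq> k' \<longrightarrow> (\<forall>i<M. \<forall>c<Nc.
                hadamard (mat_mult Nc (pad Ng (\<Omega> k)) (perm_mat Nc (int (\<phi> k))))
                         (mat_mult Nc (pad Ng (\<Omega> k')) (perm_mat Nc (int (\<phi> k')))) i c = 0)"
  have off: "\<Omega> k i j * ?s k i j k' = 0" if "k < K" "k' < K" "k \<noteq> k'" "i < M" "j < Ng" for k k' i j
  proof -
    have jN: "j < Nc" using that assms(5) by simp
    have Nc: "0 < Nc" using assms(3) .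
    define c where "c = nat ((int j + int (\<phi> k)) mod int Nc)"
    have cN: "c < Nc" using Nc by (simp add: c_def nat_less_iff)
    have c1: "(int c - int (\<phi> k)) mod int Nc = int j"
    proof -
      have "int c = (int j + int (\<phi> k)) mod int Nc" using Nc by (simp add: c_def)
      then have "(int c - int (\<phi> k)) mod int Nc = (int j + int (\<phi> k) - int (\<phi> k)) mod int Nc"
        by (simp add: mod_diff_left_eq)
      then show ?thesis using jN by simp
    qed
    have c2: "(int c - int (\<phi> k')) mod int Nc = (int j - (int (\<phi> k') - int (\<phi> k))) mod int Nc"
    proof -
      have "int c = (int j + int (\<phi> k)) mod int Nc" using Nc by (simp add: c_def)
      then have "(int c - int (\<phi> k')) mod int Nc = (int j + int (\<phi> k) - int (\<phi> k')) mod int Nc"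
        by (simp add: mod_diff_left_eq)
      then show ?thesis by (simp add: algebra_simps)
    qed
    have "hadamard (mat_mult Nc (pad Ng (\<Omega> k)) (perm_mat Nc (int (\<phi> k))))
                         (mat_mult Nc (pad Ng (\<Omega> k')) (perm_mat Nc (int (\<phi> k')))) i c = 0"
      using H that cN by blast
    then show ?thesis
      using cN jN that by (simp add: hadamard_def mm_perm c1 c2 shifted_eq pad_def)
  qed
  have termeq: "(corr k \<Delta>)\<^sup>2 * ((\<Omega> k i j)\<^sup>2 / ((\<Sum>k'<K. ?s k i j k') + 1 / \<rho>))
      = (corr k \<Delta>)\<^sup>2 * ((\<Omega> k i j)\<^sup>2 / (\<Omega> k i j + 1 / \<rho>))"
    if "k < K" "i < M" "j < Ng" for k i j
  proof (cases "\<Omega> k i j = 0")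
    case True then show ?thesis by simp
  next
    case False
    have "(\<Sum>k'<K. ?s k i j k') = (\<Sum>k'<K. if k' = k then \<Omega> k i j else 0)"
    proof (rule sum.cong)
      fix k' assume "k' \<in> {..<K}"
      then show "?s k i j k' = (if k' = k then \<Omega> k i j else 0)"
        using off[of k k' i j] that False diag[of j k i] by auto
    qed simp
    also have "\<dots> = \<Omega> k i j" using that by (simp add: sum.delta)
    finally show ?thesis by simp
  qed
  show "eps_CP K M Nc Ng \<rho> \<Omega> \<phi> corr \<Delta> = veps_CP K M Ng \<rho> \<Omega> corr \<Delta>"
    unfolding veps_CP_def eps_CP_def
    by (intro sum.cong refl) (use termeq in auto)
qed

end
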